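(* Let $\mathsf{A}$ be a function from the pairs $i<j$ of $\{0,\dots,n\}$ into the nonnegative integers satisfying condition (!), and suppose $\mathsf{A}$ is indecomposable. Then $\mathsf{A}(i,n)>0$ for every $i<n$.
   Context: For integers $p,q,r$ write $r=p\,!\,q$ if $r\ge\min(p-1,q)$, with equality holding unless $p=q$. A function $\mathsf{A}$ on pairs $a<b$ of a finite linear order into the nonnegative integers satisfies (!) if $\mathsf{A}(a,b)=\mathsf{A}(b,c)\,!\,\mathsf{A}(a,c)$ whenever $a<b<c$. For such functions $\mathsf{B},\mathsf{C}$ with bases $B,C$, $\mathsf{B}+\mathsf{C}$ has base $B$ followed by $C$, agrees with $\mathsf{B}$ on $B$ and $\mathsf{C}$ on $C$, and takes value $0$ on pairs $(b,c)$ with $b\in B$, $c\in C$; functions are identified when an order-preserving bijection of the bases carries one to the other. $\mathsf{A}$ is indecomposable if there are no $\mathsf{B},\mathsf{C}$ with nonempty bases such that $\mathsf{A}=\mathsf{B}+\mathsf{C}$. *)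

theory Defs
  imports Main
begin

text \<open>Functions on pairs a<b of the finite linear order {0..n}; values outside are irrelevant.\<close>

definition bang :: "int \<Rightarrow> int \<Rightarrow> int \<Rightarrow> bool" where
  "bang p q r \<longleftrightarrow> r \<ge> min (p - 1) q \<and> (p \<noteq> q \<longrightarrow> r = min (p - 1) q)"

definition satisfies_bang :: "nat \<Rightarrow> (nat \<Rightarrow> nat \<Rightarrow> nat) \<Rightarrow> bool" where
  "satisfies_bang n A \<longleftrightarrow>
     (\<forall>a b c. a < b \<and> b < c \<and> c \<le> n \<longrightarrow>
        bang (int (A b c)) (int (A a c)) (int (A a b)))"

text \<open>Sum of B (base {0..m}) and C (base {0..l}); the result has base {0..m+l+1}.\<close>
definition fsum :: "nat \<Rightarrow> (nat \<Rightarrow> nat \<Rightarrow> nat) \<Rightarrow> nat \<Rightarrow> (nat \<Rightarrow> nat \<Rightarrow> nat) \<Rightarrow> nat \<Rightarrow> nat \<Rightarrow> nat" where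
  "fsum m B l C i j =
     (if j \<le> m then B i j
      else if m < i then C (i - Suc m) (j - Suc m)
      else 0)"

definition indecomposable :: "nat \<Rightarrow> (nat \<Rightarrow> nat \<Rightarrow> nat) \<Rightarrow> bool" where
  "indecomposable n A \<longleftrightarrow>
     \<not> (\<exists>m l B C. m + l + 1 = n \<and> satisfies_bang m B \<and> satisfies_bang l C \<and>
          (\<forall>i j. i < j \<and> j \<le> n \<longrightarrow> A i j = fsum m B l C i j))"

end

theory Submission
  imports Defs
begin

theorem lemma5p7:
  fixes n :: nat and A :: "nat \<Rightarrow> nat \<Rightarrow> nat"
  assumes "satisfies_bang n A"
    and "indecomposable n A"
    and "i < n"
  shows "A i n > 0"
proof (rule ccontr)
  assume "\<not> A i n > 0"
  hence z: "A i n = 0" by simp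
  have sb: "\<And>a b c. a < b \<Longrightarrow> b < c \<Longrightarrow> c \<le> n \<Longrightarrow> bang (int (A b c)) (int (A a c)) (int (A a b))"
    using assms(1) unfolding satisfies_bang_def by blast
  define S where "S = {a. a < n \<and> A a n = 0}"
  define m where "m = Max S"
  have fS: "finite S" unfolding S_def by simp
  have iS: "i \<in> S" using z assms(3) unfolding S_def by simp
  have mS: "m \<in> S" unfolding m_def using fS iS Max_in by blast
  hence mn: "m < n" and Amn: "A m n = 0" unfolding S_def by auto
  have low: "A a n = 0" if "a \<le> m" for a
  proof (cases "a = m")
    case True thus ?thesis using Amn by simp
  next
    case False
    hence "a < m" using that by simp
    from sb[OF this mn order_refl] Amn show ?thesis unfolding bang_def
      by (cases "A a n = 0") auto
  qed
  have high: "A a n > 0" if "m < a" "a < n" for a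
  proof (rule ccontr)
    assume "\<not> A a n > 0"
    hence "a \<in> S" using that unfolding S_def by simp
    hence "a \<le> m" unfolding m_def using fS by simp
    thus False using that by simp
  qed
  have cross: "A a c = 0" if "a \<le> m" "m < c" "c \<le> n" for a c
  proof (cases "c = n")
    case True thus ?thesis using low that by simp
  next
    case False
    hence cn: "c < n" using that by simp
    have "a < c" using that by simp
    from sb[OF this cn order_refl] high[OF that(2) cn] low[OF that(1)]
    show ?thesis unfolding bang_def by auto
  qed
  define l where "l = n - m - 1"
  define C where "C = (\<lambda>x y. A (x + Suc m) (y + Suc m))"
  have e: "m + l + 1 = n" unfolding l_def using mn by simp
  have sB: "satisfies_bang m A" unfolding satisfies_bang_def using sb mn by auto
  have sC: "satisfies_bang l C" unfolding satisfies_bang_def C_def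
  proof (intro allI impI)
    fix a b c assume "a < b \<and> b < c \<and> c \<le> l"
    thus "bang (int (A (b + Suc m) (c + Suc m))) (int (A (a + Suc m) (c + Suc m))) (int (A (a + Suc m) (b + Suc m)))"
      using sb[of "a + Suc m" "b + Suc m" "c + Suc m"] e by simp
  qed
  have eq: "\<forall>i j. i < j \<and> j \<le> n \<longrightarrow> A i j = fsum m A l C i j"
  proof (intro allI impI)
    fix i j assume h: "i < j \<and> j \<le> n"
    show "A i j = fsum m A l C i j"
    proof (cases "j \<le> m")
      case True thus ?thesis unfolding fsum_def by simp
    next
      case False
      show ?thesis
      proof (cases "m < i")
        case True thus ?thesis using False unfolding fsum_def C_def by simp
      next
        case F2: False
        thus ?thesis using False cross[of i j] h unfolding fsum_def by simp
      qed
    qed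
  qed
  show False using assms(2) e sB sC eq unfolding indecomposable_def by blast
qed

end
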